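(* Let $(Z,\tau)$ be a topological space with a countable basis of open sets. For every $R>0$ let $f_R,\,g_R:Z\to\mathbb{R}$ be upper semicontinuous functions such that $$f_R\le g_R\le f_{R+\epsilon}\quad\text{on } Z\qquad\text{for all } R>0,\ \epsilon>0.$$ Then the set of $R>0$ for which $f_R\not\equiv g_R$ on $Z$ is at most countable. *)

theory Defs
  imports "HOL-Analysis.Analysis"
begin

definition upper_semicontinuous_on_top :: "'a topology \<Rightarrow> ('a \<Rightarrow> real) \<Rightarrow> bool" where
  "upper_semicontinuous_on_top X f \<longleftrightarrow> (\<forall>a. openin X {x \<in> topspace X. f x < a})"

end

theory Submission
  imports Defs
begin

theorem lemma2p1:
  fixes X :: "'a topology" and f g :: "real \<Rightarrow> 'a \<Rightarrow> real"
  assumes "second_countable X"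
    and "\<And>R. R > 0 \<Longrightarrow> upper_semicontinuous_on_top X (f R)"
    and "\<And>R. R > 0 \<Longrightarrow> upper_semicontinuous_on_top X (g R)"
    and "\<And>R \<epsilon> z. R > 0 \<Longrightarrow> \<epsilon> > 0 \<Longrightarrow> z \<in> topspace X \<Longrightarrow>
           f R z \<le> g R z \<and> g R z \<le> f (R + \<epsilon>) z"
  shows "countable {R. R > 0 \<and> (\<exists>z \<in> topspace X. f R z \<noteq> g R z)}"
proof -
  obtain B where B: "countable B" "\<And>V. V \<in> B \<Longrightarrow> openin X V"
    "\<And>U x. openin X U \<Longrightarrow> x \<in> U \<Longrightarrow> \<exists>V \<in> B. x \<in> V \<and> V \<subseteq> U"
    using assms(1) unfolding second_countable_def by metis
  define S where "S = {R. R > 0 \<and> (\<exists>z \<in> topspace X. f R z \<noteq> g R z)}"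
  define P where "P R p \<longleftrightarrow> fst p \<in> B \<and> (\<exists>z\<in>fst p. of_rat (snd p) < g R z)
      \<and> fst p \<subseteq> {x\<in>topspace X. f R x < of_rat (snd p)}" for R and p :: "'a set \<times> rat"
  have ex: "\<exists>p. P R p" if "R \<in> S" for R
  proof -
    from that obtain z where R: "R > 0" and z: "z \<in> topspace X" "f R z \<noteq> g R z"
      unfolding S_def by blast
    have "f R z \<le> g R z" using assms(4)[of R 1 z] R z by simp
    with z have "f R z < g R z" by simp
    then obtain q where q: "q \<in> \<rat>" "f R z < q" "q < g R z" using Rats_dense_in_real by blast
    then obtain r where r: "q = of_rat r" by (auto elim: Rats_cases)
    have "openin X {x\<in>topspace X. f R x < q}"
      using assms(2)[OF R] unfolding upper_semicontinuous_on_top_def by blast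
    then obtain V where V: "V \<in> B" "z \<in> V" "V \<subseteq> {x\<in>topspace X. f R x < q}"
      using B(3) z q by blast
    have "P R (V, r)" unfolding P_def using V q r by auto
    then show ?thesis by blast
  qed
  define h where "h R = (SOME p. P R p)" for R
  have hP: "P R (h R)" if "R \<in> S" for R
    unfolding h_def using ex[OF that] by (rule someI_ex)
  have key: False if "R \<in> S" "R' \<in> S" "R < R'" "h R = h R'" for R R'
  proof -
    obtain V r where hv: "h R = (V, r)" by fastforce
    have PR: "P R (V, r)" and PR': "P R' (V, r)" using hP that hv by metis+
    from PR obtain z where z: "z \<in> V" "of_rat r < g R z" unfolding P_def by auto
    from PR' z have zt: "z \<in> topspace X" "f R' z < of_rat r" unfolding P_def by auto
    have "R > 0" using that unfolding S_def by auto
    then have "g R z \<le> f (R + (R' - R)) z" using assms(4)[of R "R' - R" z] that zt by simp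
    then show False using z zt by simp
  qed
  have "inj_on h S"
  proof (rule inj_onI)
    fix R R' assume a: "R \<in> S" "R' \<in> S" "h R = h R'"
    show "R = R'"
    proof (rule ccontr)
      assume "R \<noteq> R'"
      then have "R < R' \<or> R' < R" by linarith
      then show False using key a by metis
    qed
  qed
  moreover have "h ` S \<subseteq> B \<times> UNIV"
  proof
    fix p assume "p \<in> h ` S"
    then obtain R where "R \<in> S" "p = h R" by blast
    then have "fst p \<in> B" using hP unfolding P_def by blast
    then show "p \<in> B \<times> UNIV" by (cases p) auto
  qed
  then have "countable (h ` S)"
    using B(1) by (meson countable_SIGMA countable_subset uncountable_def countableI_type)
  ultimately show ?thesis unfolding S_def[symmetric] by (metis countable_image_inj_on)
qed

end
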